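(* Let $\Gamma$ be a Deza graph with parameters $(n,k,k-1,a)$, $k>1$, $\beta=1$, and let $\Gamma''$ be the graph defined below. Then $\Gamma''$ is a Deza graph with parameters $(\frac{n}{2},\frac{k-1}{2},\frac{a}{2},\frac{a-2}{2})$. More precisely, for two distinct vertices $\{x,x_b\}$ and $\{y,y_b\}$ of $\Gamma''$, call the pair special if $x$ and $y$ are $NA$-vertices, $\{x',x_b'\}\ne\{y,y_b\}$, and there are exactly $8$ edges of $\Gamma$ between $\{x,x',x_b,x_b'\}$ and $\{y,y',y_b,y_b'\}$. If the two vertices are adjacent in $\Gamma''$, they have $\frac{a}{2}$ common neighbours in $\Gamma''$ if the pair is special and $\frac{a-2}{2}$ otherwise; if they are non-adjacent, they have $\frac{a-2}{2}$ common neighbours if the pair is special and $\frac{a}{2}$ otherwise.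
   Context: A Deza graph with parameters $(n,k,b,a)$, $a\le b$, is a $k$-regular graph on $n$ vertices in which any two distinct vertices have $a$ or $b$ common neighbours; $\beta$ is the number of vertices $u\ne v$ with exactly $b$ common neighbours with a given vertex $v$. Since $\beta=1$, for each vertex $x$ let $x_b$ denote the unique vertex having $b=k-1$ common neighbours with $x$. A vertex $x$ is an $A$-vertex if $x$ is adjacent to $x_b$, and an $NA$-vertex otherwise. For an $NA$-vertex $x$, $x'$ denotes the unique neighbour of $x$ not adjacent to $x_b$, and $x_b'=(x')_b=(x_b)'$. Let $\Gamma'$ be obtained from $\Gamma$ by removing all edges $\{x,x_b\}$ with $x$ an $A$-vertex and all edges $\{x,x'\}$ with $x$ an $NA$-vertex. Let $\Gamma''$ be the graph whose vertices are the pairs $\{x,x_b\}$, two distinct pairs $\{x,x_b\}$ and $\{y,y_b\}$ being adjacent iff all four edges between them are present in $\Gamma'$. *)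

theory Defs
  imports Main
begin

definition simple_graph :: "'a set \<Rightarrow> ('a \<Rightarrow> 'a \<Rightarrow> bool) \<Rightarrow> bool" where
  "simple_graph V E \<longleftrightarrow> finite V \<and> (\<forall>x y. E x y \<longrightarrow> x \<in> V \<and> y \<in> V)
     \<and> (\<forall>x y. E x y \<longrightarrow> E y x) \<and> (\<forall>x. \<not> E x x)"

definition common :: "'a set \<Rightarrow> ('a \<Rightarrow> 'a \<Rightarrow> bool) \<Rightarrow> 'a \<Rightarrow> 'a \<Rightarrow> nat" where
  "common V E x y = card {z \<in> V. E x z \<and> E y z}"

definition deza_graph :: "'a set \<Rightarrow> ('a \<Rightarrow> 'a \<Rightarrow> bool) \<Rightarrow> nat \<Rightarrow> nat \<Rightarrow> nat \<Rightarrow> nat \<Rightarrow> bool" where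
  "deza_graph V E n k b a \<longleftrightarrow> simple_graph V E \<and> card V = n \<and> a \<le> b
     \<and> (\<forall>x\<in>V. card {y \<in> V. E x y} = k)
     \<and> (\<forall>x\<in>V. \<forall>y\<in>V. x \<noteq> y \<longrightarrow> common V E x y = a \<or> common V E x y = b)"

definition beta :: "'a set \<Rightarrow> ('a \<Rightarrow> 'a \<Rightarrow> bool) \<Rightarrow> nat \<Rightarrow> 'a \<Rightarrow> nat" where
  "beta V E b v = card {u \<in> V. u \<noteq> v \<and> common V E v u = b}"

definition xb :: "'a set \<Rightarrow> ('a \<Rightarrow> 'a \<Rightarrow> bool) \<Rightarrow> nat \<Rightarrow> 'a \<Rightarrow> 'a" where
  "xb V E k x = (THE u. u \<in> V \<and> u \<noteq> x \<and> common V E x u = k - 1)"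

definition A_vertex :: "'a set \<Rightarrow> ('a \<Rightarrow> 'a \<Rightarrow> bool) \<Rightarrow> nat \<Rightarrow> 'a \<Rightarrow> bool" where
  "A_vertex V E k x \<longleftrightarrow> E x (xb V E k x)"

definition NA_vertex :: "'a set \<Rightarrow> ('a \<Rightarrow> 'a \<Rightarrow> bool) \<Rightarrow> nat \<Rightarrow> 'a \<Rightarrow> bool" where
  "NA_vertex V E k x \<longleftrightarrow> \<not> E x (xb V E k x)"

text \<open>x': the unique neighbour of x not adjacent to x_b (meaningful for NA-vertices).\<close>
definition xprime :: "'a set \<Rightarrow> ('a \<Rightarrow> 'a \<Rightarrow> bool) \<Rightarrow> nat \<Rightarrow> 'a \<Rightarrow> 'a" where
  "xprime V E k x = (THE y. y \<in> V \<and> E x y \<and> \<not> E y (xb V E k x))"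

definition Eprime :: "'a set \<Rightarrow> ('a \<Rightarrow> 'a \<Rightarrow> bool) \<Rightarrow> nat \<Rightarrow> 'a \<Rightarrow> 'a \<Rightarrow> bool" where
  "Eprime V E k u v \<longleftrightarrow> E u v
     \<and> \<not> (A_vertex V E k u \<and> v = xb V E k u) \<and> \<not> (A_vertex V E k v \<and> u = xb V E k v)
     \<and> \<not> (NA_vertex V E k u \<and> v = xprime V E k u) \<and> \<not> (NA_vertex V E k v \<and> u = xprime V E k v)"

definition V2 :: "'a set \<Rightarrow> ('a \<Rightarrow> 'a \<Rightarrow> bool) \<Rightarrow> nat \<Rightarrow> 'a set set" where
  "V2 V E k = (\<lambda>x. {x, xb V E k x}) ` V"

definition E2 :: "'a set \<Rightarrow> ('a \<Rightarrow> 'a \<Rightarrow> bool) \<Rightarrow> nat \<Rightarrow> 'a set \<Rightarrow> 'a set \<Rightarrow> bool" where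
  "E2 V E k P Q \<longleftrightarrow> P \<in> V2 V E k \<and> Q \<in> V2 V E k \<and> P \<noteq> Q
     \<and> (\<forall>u\<in>P. \<forall>v\<in>Q. Eprime V E k u v)"

definition special :: "'a set \<Rightarrow> ('a \<Rightarrow> 'a \<Rightarrow> bool) \<Rightarrow> nat \<Rightarrow> 'a \<Rightarrow> 'a \<Rightarrow> bool" where
  "special V E k x y \<longleftrightarrow> NA_vertex V E k x \<and> NA_vertex V E k y
     \<and> {xprime V E k x, xprime V E k (xb V E k x)} \<noteq> {y, xb V E k y}
     \<and> card {(u, v). u \<in> {x, xprime V E k x, xb V E k x, xprime V E k (xb V E k x)}
                   \<and> v \<in> {y, xprime V E k y, xb V E k y, xprime V E k (xb V E k y)}
                   \<and> E u v} = 8"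

end

theory Submission
  imports Defs
begin

locale dz =
  fixes V :: "'a set" and E :: "'a \<Rightarrow> 'a \<Rightarrow> bool" and n k a :: nat
  assumes dz: "deza_graph V E n k (k - 1) a" and k1: "k > 1"
    and bt: "\<forall>v\<in>V. beta V E (k - 1) v = 1"
begin

abbreviation "b \<equiv> xb V E k"
abbreviation "xp \<equiv> xprime V E k"

lemma fin: "finite V" using dz by (simp add: deza_graph_def simple_graph_def)
lemma Esym: "E x y \<Longrightarrow> E y x" using dz by (simp add: deza_graph_def simple_graph_def)
lemma Eirr: "\<not> E x x" using dz by (simp add: deza_graph_def simple_graph_def)
lemma EV1: "E x y \<Longrightarrow> x \<in> V" using dz by (simp add: deza_graph_def simple_graph_def)
lemma EV2: "E x y \<Longrightarrow> y \<in> V" using dz by (simp add: deza_graph_def simple_graph_def)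
lemma Ecomm: "E x y = E y x" using Esym by blast
lemma deg: "x \<in> V \<Longrightarrow> card {y\<in>V. E x y} = k" using dz by (simp add: deza_graph_def)
lemma cmn: "x \<in> V \<Longrightarrow> y \<in> V \<Longrightarrow> x \<noteq> y \<Longrightarrow> common V E x y = a \<or> common V E x y = k - 1"
  using dz by (simp add: deza_graph_def)
lemma ale: "a \<le> k - 1" using dz by (simp add: deza_graph_def)
lemma ncard: "card V = n" using dz by (simp add: deza_graph_def)

lemma common_sym: "common V E x y = common V E y x"
  unfolding common_def by (metis (no_types, lifting) Collect_cong)

lemma common_self: "x \<in> V \<Longrightarrow> common V E x x = k"
  unfolding common_def using deg by simp

lemma bset: assumes "x \<in> V" shows "\<exists>u. {u\<in>V. u \<noteq> x \<and> common V E x u = k - 1} = {u}"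
proof -
  have "card {u\<in>V. u \<noteq> x \<and> common V E x u = k - 1} = 1"
    using bt assms unfolding beta_def by auto
  then show ?thesis by (metis card_1_singletonE)
qed

lemma b_props: assumes "x \<in> V" shows "b x \<in> V \<and> b x \<noteq> x \<and> common V E x (b x) = k - 1"
    and "\<And>u. u \<in> V \<Longrightarrow> u \<noteq> x \<Longrightarrow> common V E x u = k - 1 \<Longrightarrow> u = b x"
proof -
  obtain u where u: "{u\<in>V. u \<noteq> x \<and> common V E x u = k - 1} = {u}" using bset assms by blast
  have ex: "\<And>w. (w \<in> V \<and> w \<noteq> x \<and> common V E x w = k - 1) = (w = u)" using u by blast
  have "b x = u" unfolding xb_def using ex by simp
  then show "b x \<in> V \<and> b x \<noteq> x \<and> common V E x (b x) = k - 1" 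
    and "\<And>w. w \<in> V \<Longrightarrow> w \<noteq> x \<Longrightarrow> common V E x w = k - 1 \<Longrightarrow> w = b x" using ex by auto
qed

lemma bV: "x \<in> V \<Longrightarrow> b x \<in> V" using b_props by blast
lemma bne: "x \<in> V \<Longrightarrow> b x \<noteq> x" using b_props by blast
lemma bcm: "x \<in> V \<Longrightarrow> common V E x (b x) = k - 1" using b_props by blast

lemma bb: assumes "x \<in> V" shows "b (b x) = x"
proof -
  have "x = b (b x)"
    apply (rule b_props(2)[OF bV[OF assms]])
    using assms bne[OF assms] bcm[OF assms] common_sym by auto
  then show ?thesis by simp
qed

lemma binj: "x \<in> V \<Longrightarrow> y \<in> V \<Longrightarrow> b x = b y \<Longrightarrow> x = y" using bb by metis

lemma a_lt: assumes "x \<in> V" shows "a < k - 1"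
proof (rule ccontr)
  assume "\<not> a < k - 1"
  then have ak: "a = k - 1" using ale by simp
  have "{u\<in>V. u \<noteq> x \<and> common V E x u = k - 1} = V - {x}"
    using cmn[OF assms] ak by auto
  then have c1: "card (V - {x}) = 1" using bt assms unfolding beta_def by auto
  have "{y\<in>V. E x y} \<subseteq> V - {x}" using Eirr by auto
  then have "card {y\<in>V. E x y} \<le> card (V - {x})" by (intro card_mono) (use fin in auto)
  then have "k \<le> 1" using c1 deg[OF assms] by simp
  then show False using k1 by simp
qed

lemma cmn_a: "x \<in> V \<Longrightarrow> y \<in> V \<Longrightarrow> y \<noteq> x \<Longrightarrow> y \<noteq> b x \<Longrightarrow> common V E x y = a"
  using cmn b_props(2) by metis



lemma walk: assumes x: "x \<in> V" and y: "y \<in> V"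
  shows "(\<Sum>z\<in>{z\<in>V. E x z}. common V E z y) = (\<Sum>w\<in>{w\<in>V. E y w}. common V E x w)"
proof -
  let ?S1 = "SIGMA z:{z\<in>V. E x z}. {w\<in>V. E z w \<and> E y w}"
  let ?S2 = "SIGMA w:{w\<in>V. E y w}. {z\<in>V. E x z \<and> E w z}"
  have "(\<Sum>z\<in>{z\<in>V. E x z}. common V E z y) = card ?S1"
    unfolding common_def using fin by (subst card_SigmaI) auto
  moreover have "(\<Sum>w\<in>{w\<in>V. E y w}. common V E x w) = card ?S2"
    unfolding common_def using fin by (subst card_SigmaI) auto
  moreover have "?S2 = prod.swap ` ?S1" using Esym by auto
  moreover have "card (prod.swap ` ?S1) = card ?S1" by (rule card_image) simp
  ultimately show ?thesis by simp
qed

lemma sum_common: assumes x: "x \<in> V" and y: "y \<in> V"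
  shows "(\<Sum>z\<in>{z\<in>V. E x z}. common V E z y) = a * k + (if E x y then k - a else 0) + (if E x (b y) then k - 1 - a else 0)"
proof -
  have al: "a < k - 1" using a_lt[OF x] .
  have "\<forall>z\<in>{z\<in>V. E x z}. common V E z y = a + (if z = y then k - a else 0) + (if z = b y then k - 1 - a else 0)"
  proof
    fix z assume z: "z \<in> {z\<in>V. E x z}"
    show "common V E z y = a + (if z = y then k - a else 0) + (if z = b y then k - 1 - a else 0)"
    proof (cases "z = y")
      case True then show ?thesis using common_self[OF y] bne[OF y] al by auto
    next
      case F: False
      show ?thesis
      proof (cases "z = b y")
        case True then show ?thesis using bcm[OF y] common_sym al F by auto
      next
        case False
        have "common V E y z = a" using cmn_a[OF y] z F False by auto
        then show ?thesis using F False common_sym by auto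
      qed
    qed
  qed
  then have "(\<Sum>z\<in>{z\<in>V. E x z}. common V E z y) = (\<Sum>z\<in>{z\<in>V. E x z}. a + (if z = y then k - a else 0) + (if z = b y then k - 1 - a else 0))"
    by (intro sum.cong refl) blast
  also have "\<dots> = a * k + (if E x y then k - a else 0) + (if E x (b y) then k - 1 - a else 0)"
    using fin deg[OF x] y bV[OF y] by (simp add: sum.distrib sum.delta)
  finally show ?thesis .
qed

lemma bE: assumes x: "x \<in> V" and y: "y \<in> V" shows "E x (b y) \<longleftrightarrow> E (b x) y"
proof -
  have "(\<Sum>w\<in>{w\<in>V. E y w}. common V E x w) = (\<Sum>w\<in>{w\<in>V. E y w}. common V E w x)"
    using common_sym by simp
  then have "a * k + (if E x y then k - a else 0) + (if E x (b y) then k - 1 - a else 0)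
     = a * k + (if E y x then k - a else 0) + (if E y (b x) then k - 1 - a else 0)"
    using walk[OF x y] sum_common[OF x y] sum_common[OF y x] by simp
  then have "(if E x (b y) then k - 1 - a else 0) = (if E y (b x) then k - 1 - a else (0::nat))"
    using Ecomm[of x y] by (simp split: if_splits)
  then show ?thesis using a_lt[OF x] Ecomm by (auto split: if_splits)
qed

lemma bEb: assumes x: "x \<in> V" and y: "y \<in> V" shows "E (b x) (b y) \<longleftrightarrow> E x y"
  using bE[OF x bV[OF y]] bb[OF y] by simp


lemma twin: assumes x: "x \<in> V" and A: "E x (b x)" and y: "y \<noteq> b x" and xy: "E x y"
  shows "E (b x) y"
proof -
  let ?I = "{z\<in>V. E x z \<and> E (b x) z}"
  let ?D = "{z\<in>V. E x z} - {b x}"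
  have "?I \<subseteq> ?D" using Eirr by auto
  moreover have "card ?I = k - 1" using bcm[OF x] unfolding common_def .
  moreover have "card ?D = k - 1" using deg[OF x] A bV[OF x] fin by simp
  ultimately have "?I = ?D" using fin by (intro card_subset_eq) auto
  then show ?thesis using y xy EV2[OF xy] by blast
qed

lemma twin_iff: assumes x: "x \<in> V" and A: "E x (b x)" and y1: "y \<noteq> x" and y2: "y \<noteq> b x"
  shows "E x y \<longleftrightarrow> E (b x) y"
proof
  assume "E x y" then show "E (b x) y" using twin x A y2 by blast
next
  assume h: "E (b x) y"
  have "E (b x) (b (b x))" using A bb[OF x] Esym by simp
  then show "E x y" using twin[OF bV[OF x] _ _ h] bb[OF x] y1 by simp
qed

lemma na_props: assumes x: "x \<in> V" and NA: "\<not> E x (b x)"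
  shows "xp x \<in> V \<and> E x (xp x) \<and> \<not> E (xp x) (b x)"
    and "\<And>y. y \<in> V \<Longrightarrow> E x y \<Longrightarrow> \<not> E y (b x) \<Longrightarrow> y = xp x"
proof -
  let ?I = "{z\<in>V. E x z \<and> E (b x) z}"
  let ?D = "{y\<in>V. E x y \<and> \<not> E y (b x)}"
  have "{z\<in>V. E x z} = ?I \<union> ?D" using Esym by auto
  moreover have "?I \<inter> ?D = {}" using Esym by auto
  ultimately have "card {z\<in>V. E x z} = card ?I + card ?D" using fin
    by (metis (no_types, lifting) card_Un_disjoint finite_Un mem_Collect_eq rev_finite_subset subsetI)
  moreover have "card ?I = k - 1" using bcm[OF x] unfolding common_def .
  ultimately have "card ?D = 1" using deg[OF x] k1 by simp
  then obtain u where u: "?D = {u}" by (metis card_1_singletonE)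
  have ex: "\<And>w. (w \<in> V \<and> E x w \<and> \<not> E w (b x)) = (w = u)" using u by blast
  have "xp x = u" unfolding xprime_def using ex by simp
  then show "xp x \<in> V \<and> E x (xp x) \<and> \<not> E (xp x) (b x)"
    and "\<And>y. y \<in> V \<Longrightarrow> E x y \<Longrightarrow> \<not> E y (b x) \<Longrightarrow> y = xp x" using ex by auto
qed

lemma xpV: "x \<in> V \<Longrightarrow> \<not> E x (b x) \<Longrightarrow> xp x \<in> V" using na_props by blast
lemma xpE: "x \<in> V \<Longrightarrow> \<not> E x (b x) \<Longrightarrow> E x (xp x)" using na_props by blast
lemma xpN: "x \<in> V \<Longrightarrow> \<not> E x (b x) \<Longrightarrow> \<not> E (xp x) (b x)" using na_props by blast

lemma na_b: "x \<in> V \<Longrightarrow> \<not> E x (b x) \<Longrightarrow> \<not> E (b x) (b (b x))"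
  using bb Esym by metis

lemma na_xp: assumes x: "x \<in> V" and NA: "\<not> E x (b x)"
  shows "\<not> E (xp x) (b (xp x))"
proof
  let ?y = "xp x"
  assume A: "E ?y (b ?y)"
  have yV: "?y \<in> V" using xpV[OF x NA] .
  have "x \<noteq> ?y" using xpE[OF x NA] Eirr by auto
  moreover have "x \<noteq> b ?y"
  proof
    assume "x = b ?y"
    then have "b x = ?y" using bb[OF yV] by simp
    then show False using NA xpE[OF x NA] by simp
  qed
  ultimately have "E (b ?y) x" using twin[OF yV A] xpE[OF x NA] Esym by blast
  then have "E ?y (b x)" using bE[OF yV x] Esym by blast
  then show False using xpN[OF x NA] by simp
qed

lemma b_xp: assumes x: "x \<in> V" and NA: "\<not> E x (b x)"
  shows "b (xp x) = xp (b x)"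
proof -
  have NAb: "\<not> E (b x) (b (b x))" using na_b[OF x NA] .
  have yV: "xp x \<in> V" using xpV[OF x NA] .
  show ?thesis
  proof (rule na_props(2)[OF bV[OF x] NAb])
    show "b (xp x) \<in> V" using bV[OF yV] .
    show "E (b x) (b (xp x))" using bEb[OF x yV] xpE[OF x NA] by simp
    show "\<not> E (b (xp x)) (b (b x))" using bEb[OF yV bV[OF x]] xpN[OF x NA] by simp
  qed
qed

lemma xp_xp: assumes x: "x \<in> V" and NA: "\<not> E x (b x)"
  shows "xp (xp x) = x"
proof -
  have yV: "xp x \<in> V" using xpV[OF x NA] .
  have "x = xp (xp x)"
  proof (rule na_props(2)[OF yV na_xp[OF x NA]])
    show "x \<in> V" using x .
    show "E (xp x) x" using xpE[OF x NA] Esym by blast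
    show "\<not> E x (b (xp x))" using bE[OF x yV] xpN[OF x NA] Esym by blast
  qed
  then show ?thesis by simp
qed

definition m :: "'a \<Rightarrow> 'a" where "m x = (if E x (b x) then b x else xp x)"

lemma mV: "x \<in> V \<Longrightarrow> m x \<in> V" unfolding m_def using bV xpV by auto
lemma mE: "x \<in> V \<Longrightarrow> E x (m x)" unfolding m_def using xpE by auto
lemma mne: "x \<in> V \<Longrightarrow> m x \<noteq> x" using mE Eirr by metis

lemma mm: assumes x: "x \<in> V" shows "m (m x) = x"
proof (cases "E x (b x)")
  case True
  then have "E (b x) (b (b x))" using bb[OF x] Esym by simp
  then show ?thesis using True bb[OF x] unfolding m_def by simp
next
  case False
  then show ?thesis using na_xp[OF x False] xp_xp[OF x False] unfolding m_def by simp
qed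

lemma mb: assumes x: "x \<in> V" shows "m (b x) = b (m x)"
proof (cases "E x (b x)")
  case True
  then have "E (b x) (b (b x))" using bb[OF x] Esym by simp
  then show ?thesis using True bb[OF x] unfolding m_def by simp
next
  case False
  then show ?thesis using na_b[OF x False] b_xp[OF x False] unfolding m_def by simp
qed

lemma m_A: assumes x: "x \<in> V" shows "E (m x) (b (m x)) \<longleftrightarrow> E x (b x)"
proof (cases "E x (b x)")
  case True
  then have "E (b x) (b (b x))" using bb[OF x] Esym by simp
  then show ?thesis using True unfolding m_def by simp
next
  case False
  then show ?thesis using na_xp[OF x False] unfolding m_def by simp
qed

lemma m_ne_b: assumes x: "x \<in> V" and NA: "\<not> E x (b x)" shows "m x \<noteq> b x"
  using NA mE[OF x] by auto

lemma mb_ne: assumes x: "x \<in> V" and NA: "\<not> E x (b x)" shows "b (m x) \<noteq> x"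
  using NA mE[OF x] bb[OF mV[OF x]] by metis

lemma Eprime_iff: assumes u: "u \<in> V" and v: "v \<in> V"
  shows "Eprime V E k u v \<longleftrightarrow> E u v \<and> v \<noteq> m u"
proof -
  have "v = m u \<longleftrightarrow> u = m v" using mm u v by metis
  then show ?thesis unfolding Eprime_def A_vertex_def NA_vertex_def m_def
    by (metis)
qed


lemma Ep_b1: assumes x: "x \<in> V" and y: "y \<in> V" and yx: "y \<noteq> x" and ybx: "y \<noteq> b x"
  and h: "Eprime V E k x y" shows "Eprime V E k x (b y)"
proof -
  have e: "E x y" and ym: "y \<noteq> m x" using h Eprime_iff[OF x y] by auto
  have byV: "b y \<in> V" using bV[OF y] .
  show ?thesis
  proof (cases "E x (b x)")
    case True
    have "E (b x) y" using twin[OF x True ybx e] .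
    then have "E x (b y)" using bE[OF x y] by simp
    moreover have "b y \<noteq> m x" using True yx binj[OF x y] unfolding m_def by auto
    ultimately show ?thesis using Eprime_iff[OF x byV] by simp
  next
    case False
    have "E y (b x)" using na_props(2)[OF x False y e] ym False unfolding m_def by auto
    then have "E x (b y)" using bE[OF x y] Esym by blast
    moreover have "b y \<noteq> m x"
    proof
      assume "b y = m x"
      then have "y = b (xp x)" using bb[OF y] False unfolding m_def by metis
      then have "y = xp (b x)" using b_xp[OF x False] by simp
      moreover have "\<not> E (xp (b x)) (b (b x))" using xpN[OF bV[OF x] na_b[OF x False]] .
      ultimately show False using e bb[OF x] Esym by auto
    qed
    ultimately show ?thesis using Eprime_iff[OF x byV] by simp
  qed
qed

lemma Ep_b: assumes x: "x \<in> V" and y: "y \<in> V" and yx: "y \<noteq> x" and ybx: "y \<noteq> b x"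
  shows "Eprime V E k x (b y) \<longleftrightarrow> Eprime V E k x y"
proof
  assume "Eprime V E k x y" then show "Eprime V E k x (b y)" using Ep_b1 assms by blast
next
  assume h: "Eprime V E k x (b y)"
  have "b y \<noteq> x" using ybx bb[OF y] by metis
  moreover have "b y \<noteq> b x" using yx binj[OF y x] by auto
  ultimately have "Eprime V E k x (b (b y))" using Ep_b1[OF x bV[OF y] _ _ h] by simp
  then show "Eprime V E k x y" using bb[OF y] by simp
qed

lemma Ep_bb: assumes x: "x \<in> V" and y: "y \<in> V"
  shows "Eprime V E k (b x) (b y) \<longleftrightarrow> Eprime V E k x y"
proof -
  have "b y = m (b x) \<longleftrightarrow> y = m x" using mb[OF x] binj[OF y mV[OF x]] by auto
  then show ?thesis using Eprime_iff[OF x y] Eprime_iff[OF bV[OF x] bV[OF y]] bEb[OF x y] by simp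
qed

lemma Ep_block: assumes x: "x \<in> V" and y: "y \<in> V" and yx: "y \<noteq> x" and ybx: "y \<noteq> b x"
  and u: "u \<in> {x, b x}" and v: "v \<in> {y, b y}"
  shows "Eprime V E k u v \<longleftrightarrow> Eprime V E k x y"
proof -
  have "Eprime V E k (b x) y \<longleftrightarrow> Eprime V E k x (b y)"
    using Ep_bb[OF x bV[OF y]] bb[OF y] by simp
  then show ?thesis using u v Ep_b[OF x y yx ybx] Ep_bb[OF x y] by auto
qed

lemma Ep_E: "Eprime V E k u v \<Longrightarrow> E u v" unfolding Eprime_def by simp
lemma Ep_sym: "Eprime V E k u v \<Longrightarrow> Eprime V E k v u" unfolding Eprime_def using Esym by blast

lemma Ep_notb: assumes x: "x \<in> V" shows "\<not> Eprime V E k x (b x)"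
  using Eprime_iff[OF x bV[OF x]] unfolding m_def by auto



abbreviation "pr z \<equiv> {z, b z}"

lemma pr_eq: assumes x: "x \<in> V" and y: "y \<in> V"
  shows "pr x = pr y \<longleftrightarrow> y = x \<or> y = b x"
proof
  assume "pr x = pr y" then have "y \<in> pr x" by blast
  then show "y = x \<or> y = b x" by blast
next
  assume "y = x \<or> y = b x"
  then show "pr x = pr y"
  proof
    assume "y = x" then show ?thesis by simp
  next
    assume "y = b x" then have "b y = x" using bb[OF x] by simp
    then show ?thesis using \<open>y = b x\<close> by (simp add: insert_commute)
  qed
qed

lemma pr_disj: assumes x: "x \<in> V" and y: "y \<in> V" and ne: "pr x \<noteq> pr y"
  shows "pr x \<inter> pr y = {}"
proof (rule ccontr)
  assume "pr x \<inter> pr y \<noteq> {}"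
  then obtain z where "z \<in> pr x" "z \<in> pr y" by blast
  then have "(z = x \<or> z = b x) \<and> (z = y \<or> z = b y)" by blast
  then have "y = x \<or> y = b x"
    using bb[OF x] bb[OF y] by metis
  then show False using pr_eq[OF x y] ne by simp
qed

lemma pair_count: assumes Zs: "Zs \<subseteq> V" and cl: "\<And>z. z \<in> Zs \<Longrightarrow> b z \<in> Zs"
  shows "card Zs = 2 * card (pr ` Zs)"
proof -
  have U: "\<Union> (pr ` Zs) = Zs" using cl by auto
  have pw: "pairwise disjnt (pr ` Zs)"
    unfolding pairwise_def disjnt_def
  proof (intro ballI impI)
    fix P Q assume "P \<in> pr ` Zs" "Q \<in> pr ` Zs" "P \<noteq> Q"
    then obtain x y where "x \<in> Zs" "y \<in> Zs" "P = pr x" "Q = pr y" by blast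
    then show "P \<inter> Q = {}" using pr_disj Zs \<open>P \<noteq> Q\<close> by blast
  qed
  have "card (\<Union> (pr ` Zs)) = sum card (pr ` Zs)" by (rule card_Union_disjoint[OF pw]) auto
  also have "\<dots> = sum (\<lambda>_. 2) (pr ` Zs)"
  proof (rule sum.cong[OF refl])
    fix P assume "P \<in> pr ` Zs"
    then obtain x where "x \<in> Zs" "P = pr x" by blast
    then have "x \<in> V" using Zs by blast
    then have "b x \<noteq> x" using bne by blast
    then show "card P = 2" using \<open>P = pr x\<close> by simp
  qed
  also have "\<dots> = 2 * card (pr ` Zs)" by simp
  finally show ?thesis using U by simp
qed

definition Z :: "'a \<Rightarrow> 'a set" where "Z x = {z\<in>V. Eprime V E k x z}"

lemma Z_cl: assumes x: "x \<in> V" and z: "z \<in> Z x" shows "b z \<in> Z x"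
proof -
  have zV: "z \<in> V" and e: "Eprime V E k x z" using z unfolding Z_def by auto
  have "z \<noteq> x" using Ep_E[OF e] Eirr by auto
  moreover have "z \<noteq> b x" using e Ep_notb[OF x] by auto
  ultimately show ?thesis using Ep_b[OF x zV] e bV[OF zV] unfolding Z_def by auto
qed

lemma Z_sub: "Z x \<subseteq> V" unfolding Z_def by auto

lemma Z_notin: assumes x: "x \<in> V" and z: "z \<in> Z x" shows "z \<noteq> x \<and> z \<noteq> b x"
  using z Ep_E Eirr Ep_notb[OF x] unfolding Z_def by blast

lemma card_Z: assumes x: "x \<in> V" shows "card (Z x) = k - 1"
proof -
  have "Z x = {z\<in>V. E x z} - {m x}" unfolding Z_def using Eprime_iff[OF x] by auto
  then show ?thesis using deg[OF x] mV[OF x] mE[OF x] fin by simp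
qed

lemma V2_nbrs: assumes x: "x \<in> V"
  shows "{Q \<in> V2 V E k. E2 V E k (pr x) Q} = pr ` Z x"
proof
  show "{Q \<in> V2 V E k. E2 V E k (pr x) Q} \<subseteq> pr ` Z x"
  proof
    fix Q assume "Q \<in> {Q \<in> V2 V E k. E2 V E k (pr x) Q}"
    then obtain y where y: "y \<in> V" "Q = pr y" and e: "E2 V E k (pr x) Q" unfolding V2_def by auto
    then have "Eprime V E k x y" unfolding E2_def by auto
    then show "Q \<in> pr ` Z x" using y unfolding Z_def by auto
  qed
next
  show "pr ` Z x \<subseteq> {Q \<in> V2 V E k. E2 V E k (pr x) Q}"
  proof
    fix Q assume "Q \<in> pr ` Z x"
    then obtain z where z: "z \<in> Z x" "Q = pr z" by auto
    have zV: "z \<in> V" using z Z_sub by auto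
    have zn: "z \<noteq> x" "z \<noteq> b x" using Z_notin[OF x z(1)] by auto
    have ne: "pr x \<noteq> pr z" using pr_eq[OF x zV] zn by auto
    have e: "Eprime V E k x z" using z unfolding Z_def by auto
    have "\<forall>u\<in>pr x. \<forall>v\<in>pr z. Eprime V E k u v" using Ep_block[OF x zV zn] e by blast
    then show "Q \<in> {Q \<in> V2 V E k. E2 V E k (pr x) Q}"
      using z ne zV x unfolding E2_def V2_def by auto
  qed
qed

lemma E2_iff: assumes x: "x \<in> V" and y: "y \<in> V"
  shows "E2 V E k (pr x) (pr y) \<longleftrightarrow> pr x \<noteq> pr y \<and> Eprime V E k x y"
proof -
  have "pr y \<in> V2 V E k \<and> E2 V E k (pr x) (pr y) \<longleftrightarrow> pr y \<in> pr ` Z x"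
    using V2_nbrs[OF x] by blast
  moreover have "pr y \<in> V2 V E k" using y unfolding V2_def by auto
  moreover have "pr y \<in> pr ` Z x \<longleftrightarrow> pr x \<noteq> pr y \<and> Eprime V E k x y"
  proof
    assume "pr y \<in> pr ` Z x"
    then obtain z where z: "z \<in> Z x" "pr y = pr z" by auto
    have zV: "z \<in> V" using z Z_sub by auto
    have zn: "z \<noteq> x" "z \<noteq> b x" using Z_notin[OF x z(1)] by auto
    have "y = z \<or> y = b z" using pr_eq[OF zV y] z by auto
    moreover have "b z \<in> Z x" using Z_cl[OF x z(1)] .
    ultimately have "y \<in> Z x" using z by auto
    then show "pr x \<noteq> pr y \<and> Eprime V E k x y" using Z_notin[OF x] pr_eq[OF x y] unfolding Z_def by auto
  next
    assume "pr x \<noteq> pr y \<and> Eprime V E k x y"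
    then show "pr y \<in> pr ` Z x" using y unfolding Z_def by auto
  qed
  ultimately show ?thesis by blast
qed

lemma V2_common: assumes x: "x \<in> V" and y: "y \<in> V"
  shows "2 * common (V2 V E k) (E2 V E k) (pr x) (pr y) = card (Z x \<inter> Z y)"
proof -
  have xV2: "pr x \<in> V2 V E k" "pr y \<in> V2 V E k" using x y unfolding V2_def by auto
  have "{R \<in> V2 V E k. E2 V E k (pr x) R \<and> E2 V E k (pr y) R} = pr ` (Z x \<inter> Z y)"
  proof
    show "{R \<in> V2 V E k. E2 V E k (pr x) R \<and> E2 V E k (pr y) R} \<subseteq> pr ` (Z x \<inter> Z y)"
    proof
      fix R assume R: "R \<in> {R \<in> V2 V E k. E2 V E k (pr x) R \<and> E2 V E k (pr y) R}"
      then obtain z where z: "z \<in> V" "R = pr z" unfolding V2_def by auto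
      then have "Eprime V E k x z" "Eprime V E k y z" using R unfolding E2_def by auto
      then show "R \<in> pr ` (Z x \<inter> Z y)" using z unfolding Z_def by auto
    qed
  next
    show "pr ` (Z x \<inter> Z y) \<subseteq> {R \<in> V2 V E k. E2 V E k (pr x) R \<and> E2 V E k (pr y) R}"
      using V2_nbrs[OF x] V2_nbrs[OF y] by auto
  qed
  moreover have "card (Z x \<inter> Z y) = 2 * card (pr ` (Z x \<inter> Z y))"
    by (rule pair_count) (use Z_sub Z_cl x y in auto)
  ultimately show ?thesis unfolding common_def by simp
qed

lemma V2_deg: assumes x: "x \<in> V"
  shows "2 * card {Q \<in> V2 V E k. E2 V E k (pr x) Q} = k - 1"
proof -
  have "card (Z x) = 2 * card (pr ` Z x)"
    by (rule pair_count) (use Z_sub Z_cl x in auto)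
  then show ?thesis using V2_nbrs[OF x] card_Z[OF x] by simp
qed

lemma V2_card: "2 * card (V2 V E k) = n"
proof -
  have "card V = 2 * card (pr ` V)" by (rule pair_count) (use bV in auto)
  then show ?thesis using ncard unfolding V2_def by simp
qed


definition t :: "'a \<Rightarrow> 'a \<Rightarrow> nat" where
  "t x y = (if E (m x) y then 1 else 0) + (if E (m y) x then 1 else 0)"

lemma mm_inj: "x \<in> V \<Longrightarrow> y \<in> V \<Longrightarrow> m x = m y \<Longrightarrow> x = y" using mm by metis

lemma ZZ_card: assumes x: "x \<in> V" and y: "y \<in> V" and yx: "y \<noteq> x" and ybx: "y \<noteq> b x"
  shows "card (Z x \<inter> Z y) + t x y = a"
proof -
  let ?I = "{z\<in>V. E x z \<and> E y z}"
  have cI: "card ?I = a" using cmn_a[OF x y yx ybx] unfolding common_def .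
  have eq: "Z x \<inter> Z y = ?I - {m x, m y}" unfolding Z_def using Eprime_iff x y by auto
  have fI: "finite ?I" using fin by auto
  have mxy: "m x \<noteq> m y" using mm_inj[OF x y] yx by auto
  have "?I \<inter> {m x, m y} = (if E y (m x) then {m x} else {}) \<union> (if E x (m y) then {m y} else {})"
    using mV[OF x] mV[OF y] mE[OF x] mE[OF y] by auto
  then have cB: "card (?I \<inter> {m x, m y}) = t x y"
    unfolding t_def using mxy Ecomm[of y "m x"] Ecomm[of x "m y"] by (auto split: if_splits)
  have "card (?I \<inter> {m x, m y}) \<le> card ?I" using fI by (intro card_mono) auto
  then show ?thesis using eq card_Diff_subset_Int[of ?I "{m x, m y}"] fI cI cB by simp
qed

lemma c2t: assumes x: "x \<in> V" and y: "y \<in> V" and yx: "y \<noteq> x" and ybx: "y \<noteq> b x"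
  shows "2 * common (V2 V E k) (E2 V E k) (pr x) (pr y) + t x y = a"
  using ZZ_card[OF assms] V2_common[OF x y] by simp

lemma even_NA: assumes z: "z \<in> V" and NA: "\<not> E z (b z)" shows "even a"
proof -
  have "t z (m z) = 0" unfolding t_def using mm[OF z] Eirr by simp
  then show ?thesis using c2t[OF z mV[OF z] mne[OF z] m_ne_b[OF z NA]] by (metis add.right_neutral dvd_triv_left)
qed

lemma a_even: assumes x: "x \<in> V" and y: "y \<in> V" and yx: "y \<noteq> x" and ybx: "y \<noteq> b x"
  shows "even a"
proof (cases "E x (b x) \<and> E y (b y)")
  case True
  have xby: "x \<noteq> b y" using ybx bb[OF y] by metis
  have "t x y = (if E x y then 2 else 0)" unfolding t_def m_def
    using True twin_iff[OF x _ yx ybx] twin_iff[OF y _ yx[symmetric] xby] Ecomm[of x y] by auto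
  then show ?thesis using c2t[OF assms] by (metis add_0_right dvd_add dvd_triv_left even_numeral)
next
  case False then show ?thesis using even_NA x y by blast
qed

lemma t_sym: assumes x: "x \<in> V" and y: "y \<in> V" and yx: "y \<noteq> x" and ybx: "y \<noteq> b x"
  shows "E (m x) y \<longleftrightarrow> E (m y) x"
proof -
  have "even (t x y)" using c2t[OF assms] a_even[OF assms] by (metis dvd_add_right_iff dvd_triv_left)
  then show ?thesis unfolding t_def by (auto split: if_splits)
qed

lemma t_val: assumes x: "x \<in> V" and y: "y \<in> V" and yx: "y \<noteq> x" and ybx: "y \<noteq> b x"
  shows "2 * common (V2 V E k) (E2 V E k) (pr x) (pr y) + (if E (m x) y then 2 else 0) = a"
proof -
  have "t x y = (if E (m x) y then 2 else 0)" using t_sym[OF assms] unfolding t_def by auto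
  then show ?thesis using c2t[OF assms] by simp
qed


lemma block: assumes x: "x \<in> V" and y: "y \<in> V"
  and n1: "y \<noteq> x" and n2: "y \<noteq> b x" and n3: "y \<noteq> m x" and n4: "y \<noteq> b (m x)"
  shows "{(u,v). u \<in> pr x \<and> v \<in> pr y \<and> E u v} = (if E x y then pr x \<times> pr y else {})"
proof -
  have key: "E u v \<longleftrightarrow> E x y" if u: "u \<in> pr x" and v: "v \<in> pr y" for u v
  proof -
    have uV: "u \<in> V" using u bV[OF x] x by blast
    have vV: "v \<in> V" using v bV[OF y] y by blast
    have mu: "m u = m x \<or> m u = b (m x)" using u mb[OF x] by blast
    have "v \<noteq> m u"
    proof
      assume vm: "v = m u"
      have "b y \<noteq> m x" using n4 bb[OF y] by metis
      moreover have "b y \<noteq> b (m x)" using n3 binj[OF y mV[OF x]] by blast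
      moreover have "m u = y \<or> m u = b y" using vm v by simp
      ultimately show False using mu n3 n4 by metis
    qed
    then have "E u v \<longleftrightarrow> Eprime V E k u v" using Eprime_iff[OF uV vV] by simp
    also have "\<dots> \<longleftrightarrow> Eprime V E k x y" using Ep_block[OF x y n1 n2 u v] .
    also have "\<dots> \<longleftrightarrow> E x y" using Eprime_iff[OF x y] n3 by simp
    finally show ?thesis .
  qed
  show ?thesis
  proof (cases "E x y")
    case True
    have "{(u,v). u \<in> pr x \<and> v \<in> pr y \<and> E u v} = pr x \<times> pr y"
    proof (rule set_eqI)
      fix p :: "'a \<times> 'a"
      obtain u v where p: "p = (u, v)" by (cases p)
      show "p \<in> {(u,v). u \<in> pr x \<and> v \<in> pr y \<and> E u v} \<longleftrightarrow> p \<in> pr x \<times> pr y"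
        unfolding p using key[of u v] True by blast
    qed
    then show ?thesis using True by simp
  next
    case False
    have "{(u,v). u \<in> pr x \<and> v \<in> pr y \<and> E u v} = {}"
    proof (rule set_eqI)
      fix p :: "'a \<times> 'a"
      obtain u v where p: "p = (u, v)" by (cases p)
      show "p \<in> {(u,v). u \<in> pr x \<and> v \<in> pr y \<and> E u v} \<longleftrightarrow> p \<in> {}"
        unfolding p using key[of u v] False by blast
    qed
    then show ?thesis using False by simp
  qed
qed

lemma card_block: assumes x: "x \<in> V" and y: "y \<in> V"
  and n1: "y \<noteq> x" and n2: "y \<noteq> b x" and n3: "y \<noteq> m x" and n4: "y \<noteq> b (m x)"
  shows "card {(u,v). u \<in> pr x \<and> v \<in> pr y \<and> E u v} = (if E x y then 4 else 0)"
proof -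
  have "card (pr x) = 2" using bne[OF x] by simp
  moreover have "card (pr y) = 2" using bne[OF y] by simp
  ultimately have "card (pr x \<times> pr y) = 4" by (simp only: card_cartesian_product)
  then show ?thesis unfolding block[OF assms] by simp
qed

lemma card_split1: assumes "finite P" "finite P'" "finite Q" "P \<inter> P' = {}"
  shows "card {(u,v). u \<in> P \<union> P' \<and> v \<in> Q \<and> R u v} =
    card {(u,v). u \<in> P \<and> v \<in> Q \<and> R u v} + card {(u,v). u \<in> P' \<and> v \<in> Q \<and> R u v}"
proof -
  have f1: "finite {(u,v). u \<in> P \<and> v \<in> Q \<and> R u v}"
    by (rule finite_subset[of _ "P \<times> Q"]) (use assms in auto)
  have f2: "finite {(u,v). u \<in> P' \<and> v \<in> Q \<and> R u v}"
    by (rule finite_subset[of _ "P' \<times> Q"]) (use assms in auto)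
  have "{(u,v). u \<in> P \<union> P' \<and> v \<in> Q \<and> R u v} = {(u,v). u \<in> P \<and> v \<in> Q \<and> R u v} \<union> {(u,v). u \<in> P' \<and> v \<in> Q \<and> R u v}" by auto
  moreover have "{(u,v). u \<in> P \<and> v \<in> Q \<and> R u v} \<inter> {(u,v). u \<in> P' \<and> v \<in> Q \<and> R u v} = {}" using assms(4) by auto
  ultimately show ?thesis using card_Un_disjoint[OF f1 f2] by simp
qed

lemma card_split2: assumes "finite P" "finite Q" "finite Q'" "Q \<inter> Q' = {}"
  shows "card {(u,v). u \<in> P \<and> v \<in> Q \<union> Q' \<and> R u v} =
    card {(u,v). u \<in> P \<and> v \<in> Q \<and> R u v} + card {(u,v). u \<in> P \<and> v \<in> Q' \<and> R u v}"
proof -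
  have f1: "finite {(u,v). u \<in> P \<and> v \<in> Q \<and> R u v}"
    by (rule finite_subset[of _ "P \<times> Q"]) (use assms in auto)
  have f2: "finite {(u,v). u \<in> P \<and> v \<in> Q' \<and> R u v}"
    by (rule finite_subset[of _ "P \<times> Q'"]) (use assms in auto)
  have "{(u,v). u \<in> P \<and> v \<in> Q \<union> Q' \<and> R u v} = {(u,v). u \<in> P \<and> v \<in> Q \<and> R u v} \<union> {(u,v). u \<in> P \<and> v \<in> Q' \<and> R u v}" by auto
  moreover have "{(u,v). u \<in> P \<and> v \<in> Q \<and> R u v} \<inter> {(u,v). u \<in> P \<and> v \<in> Q' \<and> R u v} = {}" using assms(4) by auto
  ultimately show ?thesis using card_Un_disjoint[OF f1 f2] by simp
qed


lemma pr_m_disj: assumes x: "x \<in> V" and NA: "\<not> E x (b x)" shows "pr x \<inter> pr (m x) = {}"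
proof (rule pr_disj[OF x mV[OF x]])
  show "pr x \<noteq> pr (m x)" using pr_eq[OF x mV[OF x]] mne[OF x] m_ne_b[OF x NA] by simp
qed

lemma xp_m: assumes x: "x \<in> V" and NA: "\<not> E x (b x)"
  shows "xp x = m x" and "xp (b x) = b (m x)"
proof -
  show "xp x = m x" using NA unfolding m_def by simp
  have "m (b x) = xp (b x)" using na_b[OF x NA] unfolding m_def by simp
  then show "xp (b x) = b (m x)" using mb[OF x] by simp
qed


lemma special_card: assumes x: "x \<in> V" and y: "y \<in> V" and NAx: "\<not> E x (b x)" and NAy: "\<not> E y (b y)"
  and n1: "y \<noteq> x" and n2: "y \<noteq> b x" and n3: "y \<noteq> m x" and n4: "y \<noteq> b (m x)"
  shows "card {(u, v). u \<in> {x, xp x, b x, xp (b x)} \<and> v \<in> {y, xp y, b y, xp (b y)} \<and> E u v}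
     = (if E x y then 4 else 0) + (if E x (m y) then 4 else 0) + (if E (m x) y then 4 else 0) + (if E (m x) (m y) then 4 else 0)"
proof -
  have sx: "{x, xp x, b x, xp (b x)} = pr x \<union> pr (m x)" using xp_m[OF x NAx] by auto
  have sy: "{y, xp y, b y, xp (b y)} = pr y \<union> pr (m y)" using xp_m[OF y NAy] by auto
  have mxV: "m x \<in> V" and myV: "m y \<in> V" using mV x y by auto
  have mm_x: "m (m x) = x" and mm_y: "m (m y) = y" using mm x y by auto
  have bmx: "b (m (m x)) = b x" using mm_x by simp
  have c1: "m y \<noteq> x" using n3 mm_y by metis
  have c2: "m y \<noteq> b x"
  proof
    assume "m y = b x" then have "y = m (b x)" using mm_y by metis
    then show False using n4 mb[OF x] by simp
  qed
  have c3: "m y \<noteq> m x" using n1 mm_inj[OF y x] by auto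
  have c4: "m y \<noteq> b (m x)"
  proof
    assume "m y = b (m x)" then have "y = m (b (m x))" using mm_y by metis
    then have "y = b x" using mb[OF mxV] mm_x by simp
    then show False using n2 by simp
  qed
  have b1: "card {(u,v). u \<in> pr x \<and> v \<in> pr y \<and> E u v} = (if E x y then 4 else 0)"
    using card_block[OF x y n1 n2 n3 n4] .
  have b2: "card {(u,v). u \<in> pr x \<and> v \<in> pr (m y) \<and> E u v} = (if E x (m y) then 4 else 0)"
    using card_block[OF x myV c1 c2 c3 c4] .
  have b3: "card {(u,v). u \<in> pr (m x) \<and> v \<in> pr y \<and> E u v} = (if E (m x) y then 4 else 0)"
    using card_block[OF mxV y n3 n4] n1 n2 mm_x by simp
  have b4: "card {(u,v). u \<in> pr (m x) \<and> v \<in> pr (m y) \<and> E u v} = (if E (m x) (m y) then 4 else 0)"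
    using card_block[OF mxV myV c3 c4] c1 c2 mm_x by simp
  have dx: "pr x \<inter> pr (m x) = {}" using pr_m_disj[OF x NAx] .
  have dy: "pr y \<inter> pr (m y) = {}" using pr_m_disj[OF y NAy] .
  have "card {(u, v). u \<in> pr x \<union> pr (m x) \<and> v \<in> pr y \<union> pr (m y) \<and> E u v}
    = card {(u, v). u \<in> pr x \<and> v \<in> pr y \<union> pr (m y) \<and> E u v} + card {(u, v). u \<in> pr (m x) \<and> v \<in> pr y \<union> pr (m y) \<and> E u v}"
    by (rule card_split1) (use dx in auto)
  also have "\<dots> = card {(u,v). u \<in> pr x \<and> v \<in> pr y \<and> E u v} + card {(u,v). u \<in> pr x \<and> v \<in> pr (m y) \<and> E u v}
     + (card {(u,v). u \<in> pr (m x) \<and> v \<in> pr y \<and> E u v} + card {(u,v). u \<in> pr (m x) \<and> v \<in> pr (m y) \<and> E u v})"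
    using card_split2[of "pr x" "pr y" "pr (m y)" E] card_split2[of "pr (m x)" "pr y" "pr (m y)" E] dy by simp
  finally show ?thesis using sx sy b1 b2 b3 b4 by simp
qed


lemma main_pair: assumes x: "x \<in> V" and y: "y \<in> V" and yx: "y \<noteq> x" and ybx: "y \<noteq> b x"
  shows "E (m x) y \<longleftrightarrow> (E2 V E k (pr x) (pr y) \<noteq> special V E k x y)"
proof -
  have ne: "pr x \<noteq> pr y" using pr_eq[OF x y] yx ybx by simp
  have E2i: "E2 V E k (pr x) (pr y) \<longleftrightarrow> E x y \<and> y \<noteq> m x"
    using E2_iff[OF x y] Eprime_iff[OF x y] ne by simp
  show ?thesis
  proof (cases "E x (b x)")
    case Ax: True
    have "\<not> special V E k x y" using Ax unfolding special_def NA_vertex_def by simp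
    moreover have "m x = b x" using Ax unfolding m_def by simp
    ultimately show ?thesis using E2i twin_iff[OF x Ax yx ybx] ybx by simp
  next
    case NAx: False
    show ?thesis
    proof (cases "E y (b y)")
      case Ay: True
      have sp: "\<not> special V E k x y" using Ay unfolding special_def NA_vertex_def by simp
      have xby: "x \<noteq> b y" using ybx bb[OF y] by metis
      have "E (m x) y \<longleftrightarrow> E (m y) x" using t_sym[OF assms] .
      also have "\<dots> \<longleftrightarrow> E x y" using Ay twin_iff[OF y Ay yx[symmetric] xby] Ecomm[of x y] unfolding m_def by simp
      finally have 1: "E (m x) y \<longleftrightarrow> E x y" .
      have "y \<noteq> m x" using m_A[OF x] NAx Ay by auto
      then show ?thesis using 1 sp E2i by simp
    next
      case NAy: False
      have xpx: "xp x = m x" "xp (b x) = b (m x)" using xp_m[OF x NAx] by auto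
      have mxV: "m x \<in> V" using mV[OF x] .
      have NAmx: "\<not> E (m x) (b (m x))" using m_A[OF x] NAx by simp
      show ?thesis
      proof (cases "y = m x")
        case True
        have "{xp x, xp (b x)} = {y, b y}" using xpx True by simp
        then have "\<not> special V E k x y" unfolding special_def by simp
        then show ?thesis using E2i True Eirr by simp
      next
        case n3: False
        show ?thesis
        proof (cases "y = b (m x)")
          case True
          have "{xp x, xp (b x)} = {y, b y}" using xpx True bb[OF mxV] by auto
          then have "\<not> special V E k x y" unfolding special_def by simp
          moreover have "\<not> E x y"
          proof
            assume "E x y"
            then have "E (b x) (b y)" using bEb[OF x y] by simp
            then have "E (b x) (m x)" using True bb[OF mxV] by simp
            then show False using xpN[OF x NAx] xpx Esym by metis
          qed
          ultimately show ?thesis using E2i NAmx True by simp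
        next
          case n4: False
          have s1: "{xp x, xp (b x)} \<noteq> {y, b y}" using xpx n3 n4 by auto
          have e1: "E x (m y) \<longleftrightarrow> E (m x) y" using t_sym[OF assms] Ecomm by blast
          have e2: "E (m x) (m y) \<longleftrightarrow> E x y"
            using t_sym[OF mxV y n3 n4] mm[OF x] Ecomm by metis
          have cc: "card {(u, v). u \<in> {x, xp x, b x, xp (b x)} \<and> v \<in> {y, xp y, b y, xp (b y)} \<and> E u v}
             = (if E x y then 8 else 0) + (if E (m x) y then 8 else 0)"
            using special_card[OF x y NAx NAy yx ybx n3 n4] e1 e2 by simp
          have "special V E k x y \<longleftrightarrow> (E x y \<noteq> E (m x) y)"
            unfolding special_def NA_vertex_def using NAx NAy s1 cc by auto
          then show ?thesis using E2i n3 by auto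
        qed
      qed
    qed
  qed
qed

lemma final_pair: assumes x: "x \<in> V" and y: "y \<in> V" and ne: "pr x \<noteq> pr y"
  shows "let c = common (V2 V E k) (E2 V E k) (pr x) (pr y) in
          (E2 V E k (pr x) (pr y) \<longrightarrow>
             (special V E k x y \<longrightarrow> 2 * c = a) \<and> (\<not> special V E k x y \<longrightarrow> 2 * c + 2 = a))
        \<and> (\<not> E2 V E k (pr x) (pr y) \<longrightarrow>
             (special V E k x y \<longrightarrow> 2 * c + 2 = a) \<and> (\<not> special V E k x y \<longrightarrow> 2 * c = a))"
proof -
  have yx: "y \<noteq> x" and ybx: "y \<noteq> b x" using pr_eq[OF x y] ne by auto
  show ?thesis using t_val[OF x y yx ybx] main_pair[OF x y yx ybx] unfolding Let_def
    by (auto split: if_splits)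
qed

lemma final_deza: "deza_graph (V2 V E k) (E2 V E k) (n div 2) ((k - 1) div 2) (a div 2) ((a - 2) div 2)"
proof -
  have f1: "finite (V2 V E k)" unfolding V2_def using fin by simp
  have f2: "\<forall>P Q. E2 V E k P Q \<longrightarrow> P \<in> V2 V E k \<and> Q \<in> V2 V E k" unfolding E2_def by simp
  have f3: "\<forall>P Q. E2 V E k P Q \<longrightarrow> E2 V E k Q P" unfolding E2_def using Ep_sym by blast
  have f4: "\<forall>P. \<not> E2 V E k P P" unfolding E2_def by simp
  have sg: "simple_graph (V2 V E k) (E2 V E k)"
    unfolding simple_graph_def using f1 f2 f3 f4 by blast
  have cV2: "card (V2 V E k) = n div 2" using V2_card by simp
  have dg: "\<forall>P\<in>V2 V E k. card {Q \<in> V2 V E k. E2 V E k P Q} = (k - 1) div 2"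
  proof
    fix P assume "P \<in> V2 V E k"
    then obtain x where "x \<in> V" "P = pr x" unfolding V2_def by auto
    then show "card {Q \<in> V2 V E k. E2 V E k P Q} = (k - 1) div 2" using V2_deg by fastforce
  qed
  have cm: "\<forall>P\<in>V2 V E k. \<forall>Q\<in>V2 V E k. P \<noteq> Q \<longrightarrow>
      common (V2 V E k) (E2 V E k) P Q = (a - 2) div 2 \<or> common (V2 V E k) (E2 V E k) P Q = a div 2"
  proof (intro ballI impI)
    fix P Q assume P: "P \<in> V2 V E k" and Q: "Q \<in> V2 V E k" and ne: "P \<noteq> Q"
    obtain x where x: "x \<in> V" "P = pr x" using P unfolding V2_def by auto
    obtain y where y: "y \<in> V" "Q = pr y" using Q unfolding V2_def by auto
    have yx: "y \<noteq> x" and ybx: "y \<noteq> b x" using pr_eq[OF x(1) y(1)] ne x y by auto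
    have "2 * common (V2 V E k) (E2 V E k) P Q + (if E (m x) y then 2 else 0) = a"
      using t_val[OF x(1) y(1) yx ybx] x y by simp
    then show "common (V2 V E k) (E2 V E k) P Q = (a - 2) div 2 \<or> common (V2 V E k) (E2 V E k) P Q = a div 2"
      by (auto split: if_splits)
  qed
  show ?thesis unfolding deza_graph_def using sg cV2 dg cm by auto
qed

end

theorem lemma20:
  fixes V :: "'a set" and E :: "'a \<Rightarrow> 'a \<Rightarrow> bool" and n k a :: nat
  assumes "deza_graph V E n k (k - 1) a"
    and "k > 1"
    and "\<forall>v\<in>V. beta V E (k - 1) v = 1"
  shows "deza_graph (V2 V E k) (E2 V E k) (n div 2) ((k - 1) div 2) (a div 2) ((a - 2) div 2)
    \<and> 2 * card (V2 V E k) = n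
    \<and> (\<forall>P\<in>V2 V E k. 2 * card {Q \<in> V2 V E k. E2 V E k P Q} = k - 1)
    \<and> (\<forall>x\<in>V. \<forall>y\<in>V. {x, xb V E k x} \<noteq> {y, xb V E k y} \<longrightarrow>
         (let c = common (V2 V E k) (E2 V E k) {x, xb V E k x} {y, xb V E k y} in
          (E2 V E k {x, xb V E k x} {y, xb V E k y} \<longrightarrow>
             (special V E k x y \<longrightarrow> 2 * c = a) \<and> (\<not> special V E k x y \<longrightarrow> 2 * c + 2 = a))
        \<and> (\<not> E2 V E k {x, xb V E k x} {y, xb V E k y} \<longrightarrow>
             (special V E k x y \<longrightarrow> 2 * c + 2 = a) \<and> (\<not> special V E k x y \<longrightarrow> 2 * c = a))))"
proof -
  interpret dz V E n k a using assms by unfold_locales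
  have c3: "\<forall>P\<in>V2 V E k. 2 * card {Q \<in> V2 V E k. E2 V E k P Q} = k - 1"
  proof
    fix P assume "P \<in> V2 V E k"
    then obtain x where "x \<in> V" "P = {x, xb V E k x}" unfolding V2_def by auto
    then show "2 * card {Q \<in> V2 V E k. E2 V E k P Q} = k - 1" using V2_deg by blast
  qed
  show ?thesis using final_deza V2_card c3 final_pair by blast
qed

end
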